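(* Let $(U,\Phi)$ be a one-dimensional quantum walk with one defect with an initial state $\Phi\in\mathcal H_0$. Then $(U,\Phi)$ is unitary equivalent to $(U_{r,\nu},\Phi_{\alpha,\theta})$ for some $0\le r_\varepsilon,\alpha\le1$ ($\varepsilon=\pm,0$) and $\nu_i,\theta\in\mathbb R$ ($i=1,2$), where $\Phi_{\alpha,\theta}=\alpha e_1^0+e^{i\theta}\sqrt{1-\alpha^2}\,e_2^0$ and \begin{align*} U_{r,\nu}={}&|e_1^{-1}\rangle\langle r_0e_1^0+e^{i\nu_1}s_0e_2^0|+|e_2^{1}\rangle\langle -e^{i\nu_2}s_0e_1^0+e^{i(\nu_1+\nu_2)}r_0e_2^0|\\ &+\sum_{n\in\mathbb Z\setminus\{0\}}|e_1^{n-1}\rangle\langle r_\pm e_1^n+s_\pm e_2^n|+|e_2^{n+1}\rangle\langle -s_\pm e_1^n+r_\pm e_2^n|, \end{align*} with $s_\varepsilon=\sqrt{1-r_\varepsilon^2}$, $r=(r_\pm,r_0)$, $\nu=(\nu_1,\nu_2)$. Moreover, for $0<r_\varepsilon,r'_\varepsilon,\alpha,\alpha'<1$ and $\nu_i,\nu'_i,\theta,\theta'\in[0,2\pi)$, $(U_{r,\nu},\Phi_{\alpha,\theta})$ and $(U_{r',\nu'},\Phi_{\alpha',\theta'})$ are unitary equivalent if and only if $r=r'$, $\nu=\nu'$, $\alpha=\alpha'$ and $\theta=\theta'$.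
   Context: Let $\mathcal H_n=\mathbb C^2$ for $n\in\mathbb Z$, $\mathcal H=\bigoplus_{n\in\mathbb Z}\mathcal H_n$, $P_n$ the orthogonal projection onto $\mathcal H_n$, and $\{e_1^n,e_2^n\}$ the standard basis of $\mathcal H_n$; each $\mathcal H_n$ is identified with $\mathbb C^2$. Dirac notation: $|x\rangle\langle y|$ is the operator $z\mapsto\langle y,z\rangle x$ (inner product conjugate-linear in the first argument). A one-dimensional quantum walk is a unitary $U$ on $\mathcal H$ with $\operatorname{rank}(P_nUP_m)=1$ if $m=n\pm1$ and $0$ otherwise. Every such $U$ can be written as $U=\sum_{n\in\mathbb Z}|\xi_{n-1,n}\rangle\langle\zeta_{n-1,n}|+|\xi_{n+1,n}\rangle\langle\zeta_{n+1,n}|$, where $\{\xi_{n,n+1},\xi_{n+1,n}\}_{n}$ and $\{\zeta_{n,n+1},\zeta_{n+1,n}\}_{n}$ are orthonormal bases of $\mathcal H$ with $\xi_{n,n+1},\zeta_{n+1,n}\in\mathcal H_n$ and $\xi_{n+1,n},\zeta_{n,n+1}\in\mathcal H_{n+1}$. $U$ is a one-dimensional quantum walk with one defect if it has such a representation for which there exist $\xi_1,\xi_2,\zeta_1,\zeta_2\in\mathbb C^2$ with $\xi_{n,n+1}=\xi_1$, $\xi_{n,n-1}=\xi_2$, $\zeta_{n-1,n}=\zeta_1$, $\zeta_{n+1,n}=\zeta_2$ for all $n\in\mathbb Z\setminus\{0\}$. An initial state is a unit vector $\Phi\in\mathcal H_0$. Since a walk $U$ is identified with $e^{i\lambda}U$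 and a state $\Phi$ with $e^{i\lambda}\Phi$, pairs $(U,\Phi)$ and $(U',\Phi')$ are called unitary equivalent if there exist $\lambda,\lambda'\in\mathbb R$ and a unitary $W=\bigoplus_nW_n$ ($W_n$ unitary on $\mathcal H_n$) with $e^{i\lambda}WUW^*=U'$ and $e^{i\lambda'}W\Phi=\Phi'$. *)

theory Defs
  imports "HOL-Analysis.Analysis"
begin

text \<open>Each H_n is identified with complex^2 (index type 2, components 1 and 2).
  An operator U on H = (direct sum over n) H_n is represented by its blocks
  K n m = P_n U P_m, viewed as a 2x2 complex matrix mapping H_m to H_n.\<close>

type_synonym blk = "complex^2^2"
type_synonym kernel = "int \<Rightarrow> int \<Rightarrow> blk"

definition e1 :: "complex^2" where "e1 = vector [1, 0]"
definition e2 :: "complex^2" where "e2 = vector [0, 1]"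

definition cinner :: "complex^2 \<Rightarrow> complex^2 \<Rightarrow> complex" where
  "cinner x y = (\<Sum>i\<in>UNIV. cnj (x$i) * y$i)"

text \<open>Dirac notation |x><y| : z \<mapsto> <y,z> x.\<close>
definition ket_bra :: "complex^2 \<Rightarrow> complex^2 \<Rightarrow> blk" where
  "ket_bra x y = (\<chi> i j. x$i * cnj (y$j))"

definition adj :: "blk \<Rightarrow> blk" where
  "adj A = (\<chi> i j. cnj (A$j$i))"

definition cscale :: "complex \<Rightarrow> blk \<Rightarrow> blk" where
  "cscale c A = (\<chi> i j. c * A$i$j)"

definition unitary2 :: "blk \<Rightarrow> bool" where
  "unitary2 V \<longleftrightarrow> adj V ** V = mat 1 \<and> V ** adj V = mat 1"

definition orthonormal_pair :: "complex^2 \<Rightarrow> complex^2 \<Rightarrow> bool" where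
  "orthonormal_pair a b \<longleftrightarrow> cinner a a = 1 \<and> cinner b b = 1 \<and> cinner a b = 0"

definition unitary_kernel :: "kernel \<Rightarrow> bool" where
  "unitary_kernel K \<longleftrightarrow>
     (\<forall>n m. (\<Sum>\<^sub>\<infinity>k. adj (K k n) ** K k m) = (if n = m then mat 1 else 0)) \<and>
     (\<forall>n m. (\<Sum>\<^sub>\<infinity>k. K n k ** adj (K m k)) = (if n = m then mat 1 else 0))"

definition quantum_walk :: "kernel \<Rightarrow> bool" where
  "quantum_walk K \<longleftrightarrow> unitary_kernel K \<and>
     (\<forall>n m. rank (K n m) = (if m = n + 1 \<or> m = n - 1 then 1 else 0))"

text \<open>xi a b stands for \<xi>_{a,b} \<in> H_a, zeta a b for \<zeta>_{a,b} \<in> H_b (|a-b| = 1).\<close>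
definition qw_one_defect :: "kernel \<Rightarrow> bool" where
  "qw_one_defect K \<longleftrightarrow> quantum_walk K \<and>
     (\<exists>xi zeta :: int \<Rightarrow> int \<Rightarrow> complex^2.
        (\<forall>n. orthonormal_pair (xi n (n + 1)) (xi n (n - 1))) \<and>
        (\<forall>n. orthonormal_pair (zeta (n - 1) n) (zeta (n + 1) n)) \<and>
        (\<forall>a b. K a b = (if b = a + 1 \<or> b = a - 1 then ket_bra (xi a b) (zeta a b) else 0)) \<and>
        (\<exists>\<xi>1 \<xi>2 \<zeta>1 \<zeta>2. \<forall>n. n \<noteq> 0 \<longrightarrow>
            xi n (n + 1) = \<xi>1 \<and> xi n (n - 1) = \<xi>2 \<and>
            zeta (n - 1) n = \<zeta>1 \<and> zeta (n + 1) n = \<zeta>2))"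

definition unit_equiv :: "kernel \<Rightarrow> complex^2 \<Rightarrow> kernel \<Rightarrow> complex^2 \<Rightarrow> bool" where
  "unit_equiv K \<Phi> K' \<Phi>' \<longleftrightarrow>
     (\<exists>(l1::real) (l2::real) (W::int \<Rightarrow> blk). (\<forall>n. unitary2 (W n)) \<and>
        (\<forall>n m. cscale (exp (\<i> * of_real l1)) (W n ** K n m ** adj (W m)) = K' n m) \<and>
        cscale (exp (\<i> * of_real l2)) (W 0) *v \<Phi> = \<Phi>')"

definition Phi_at :: "real \<Rightarrow> real \<Rightarrow> complex^2" where
  "Phi_at \<alpha> \<theta> = vector [of_real \<alpha>, exp (\<i> * of_real \<theta>) * of_real (sqrt (1 - \<alpha>\<^sup>2))]"

definition U_std :: "real \<Rightarrow> real \<Rightarrow> real \<Rightarrow> real \<Rightarrow> kernel" where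
  "U_std rpm r0 \<nu>1 \<nu>2 a b =
    (let spm = sqrt (1 - rpm\<^sup>2); s0 = sqrt (1 - r0\<^sup>2) in
     if b = 0 then
       (if a = -1 then ket_bra e1 (vector [of_real r0, exp (\<i> * of_real \<nu>1) * of_real s0])
        else if a = 1 then ket_bra e2 (vector [- exp (\<i> * of_real \<nu>2) * of_real s0,
                                               exp (\<i> * of_real (\<nu>1 + \<nu>2)) * of_real r0])
        else 0)
     else
       (if a = b - 1 then ket_bra e1 (vector [of_real rpm, of_real spm])
        else if a = b + 1 then ket_bra e2 (vector [- of_real spm, of_real rpm])
        else 0))"

end

theory Submission
  imports Defs
begin



lemma onb_scalar:
  fixes A B C D :: complex
  assumes h1: "cnj A * A + cnj B * B = 1" and h2: "cnj C * C + cnj D * D = 1"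
    and h3: "cnj A * C + cnj B * D = 0"
  shows "C = - (A*D - B*C) * cnj B" "D = (A*D - B*C) * cnj A"
    "cnj (A*D - B*C) * (A*D - B*C) = 1"
proof -
  show c: "C = - (A*D - B*C) * cnj B" using h1 h3 by algebra
  show d: "D = (A*D - B*C) * cnj A" using h1 h3 by algebra
  define e where "e = A*D - B*C"
  have c': "C = - e * cnj B" and d': "D = e * cnj A" using c d by (simp_all add: e_def)
  have c'': "cnj C = - cnj e * B" using arg_cong[OF c', of cnj] by simp
  have d'': "cnj D = cnj e * A" using arg_cong[OF d', of cnj] by simp
  have "cnj e * e = 1" using h1 h2 c' d' c'' d'' by algebra
  then show "cnj (A*D - B*C) * (A*D - B*C) = 1" by (simp add: e_def)
qed

lemma cinner_expand: "cinner x y = cnj (x$1) * y$1 + cnj (x$2) * y$2"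
  by (simp add: cinner_def sum_2)

lemma completeness:
  assumes "orthonormal_pair u v"
  shows "cnj (cinner u z) * cinner u w + cnj (cinner v z) * cinner v w = cinner z w"
proof -
  have h1: "cnj (u$1) * u$1 + cnj (u$2) * u$2 = 1" and h2: "cnj (v$1) * v$1 + cnj (v$2) * v$2 = 1"
    and h3: "cnj (u$1) * v$1 + cnj (u$2) * v$2 = 0"
    using assms by (auto simp: orthonormal_pair_def cinner_expand)
  note o = onb_scalar[OF h1 h2 h3]
  define d where "d = u$1 * v$2 - u$2 * v$1"
  have v1: "v$1 = - d * cnj (u$2)" and v2: "v$2 = d * cnj (u$1)" and dd: "cnj d * d = 1"
    using o by (simp_all add: d_def)
  show ?thesis unfolding cinner_expand v1 v2 using h1 dd
    by simp algebra
qed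



lemma ket_bra_nth[simp]: "ket_bra x y $ i $ j = x$i * cnj (y$j)"
  by (simp add: ket_bra_def)

lemma conj_entry:
  "(cscale E (W ** ket_bra x y ** adj V)) $ i $ j = E * (W *v x)$i * cnj ((V *v y)$j)"
  by (simp add: cscale_def matrix_matrix_mult_def adj_def matrix_vector_mult_def sum_2 ket_bra_def
      algebra_simps)

lemma zero_entry: "(cscale E (W ** 0 ** adj V)) = 0"
  by (simp add: cscale_def vec_eq_iff)

definition Wm :: "complex \<Rightarrow> complex \<Rightarrow> complex^2 \<Rightarrow> complex^2 \<Rightarrow> blk" where
  "Wm P Q u v = (\<chi> i j. if i = 1 then P * cnj (u$j) else Q * cnj (v$j))"

lemma Wm_mult1[simp]: "(Wm P Q u v *v z) $ 1 = P * cinner u z"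
  by (simp add: Wm_def matrix_vector_mult_def cinner_def sum_2 algebra_simps)
lemma Wm_mult2[simp]: "(Wm P Q u v *v z) $ 2 = Q * cinner v z"
  by (simp add: Wm_def matrix_vector_mult_def cinner_def sum_2 algebra_simps)



lemma unitary_Wm:
  assumes "orthonormal_pair u v" "cnj P * P = 1" "cnj Q * Q = 1"
  shows "unitary2 (Wm P Q u v)"
proof -
  have h1: "cnj (u$1) * u$1 + cnj (u$2) * u$2 = 1" and h2: "cnj (v$1) * v$1 + cnj (v$2) * v$2 = 1"
    and h3: "cnj (u$1) * v$1 + cnj (u$2) * v$2 = 0"
    using assms by (auto simp: orthonormal_pair_def cinner_expand)
  note o = onb_scalar[OF h1 h2 h3]
  define d where "d = u$1 * v$2 - u$2 * v$1"
  have v1: "v$1 = - d * cnj (u$2)" and v2: "v$2 = d * cnj (u$1)" and dd: "cnj d * d = 1"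
    using o by (simp_all add: d_def)
  have h3': "u$1 * cnj (v$1) + u$2 * cnj (v$2) = 0" using arg_cong[OF h3, of cnj] by simp
  have a: "adj (Wm P Q u v) ** Wm P Q u v = mat 1"
    unfolding vec_eq_iff forall_2
    using assms(2,3) h1 dd
    by (simp add: Wm_def adj_def matrix_matrix_mult_def sum_2 mat_def v1 v2; algebra)
  have b: "Wm P Q u v ** adj (Wm P Q u v) = mat 1"
    unfolding vec_eq_iff forall_2
    using assms(2,3) h1 h2 h3 h3'
    by (simp add: Wm_def adj_def matrix_matrix_mult_def sum_2 mat_def; algebra)
  show ?thesis using a b by (simp add: unitary2_def)
qed



lemma cinner_swap: "cinner v u = cnj (cinner u v)"
  by (simp add: cinner_expand mult.commute)

lemma ket1_eq:
  assumes "W *v x = vector [p, 0]" "E * p * cnj ((V *v y)$1) = cnj c1" "E * p * cnj ((V *v y)$2) = cnj c2"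
  shows "cscale E (W ** ket_bra x y ** adj V) = ket_bra e1 (vector [c1, c2])"
  unfolding vec_eq_iff forall_2 conj_entry using assms by (simp add: e1_def)

lemma ket2_eq:
  assumes "W *v x = vector [0, q]" "E * q * cnj ((V *v y)$1) = cnj c1" "E * q * cnj ((V *v y)$2) = cnj c2"
  shows "cscale E (W ** ket_bra x y ** adj V) = ket_bra e2 (vector [c1, c2])"
  unfolding vec_eq_iff forall_2 conj_entry using assms by (simp add: e2_def)

lemma Wm_u: "orthonormal_pair u v \<Longrightarrow> Wm P Q u v *v u = vector [P, 0]"
  unfolding vec_eq_iff forall_2 by (simp add: orthonormal_pair_def cinner_swap[of v u])
lemma Wm_v: "orthonormal_pair u v \<Longrightarrow> Wm P Q u v *v v = vector [0, Q]"
  unfolding vec_eq_iff forall_2 by (simp add: orthonormal_pair_def)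

definition ph :: "complex \<Rightarrow> complex" where "ph z = (if z = 0 then 1 else sgn z)"

lemma cnj_mult_self: "cnj z * z = complex_of_real ((cmod z)\<^sup>2)"
  by (metis complex_norm_square mult.commute)

lemma unit_cmod: "cnj z * z = 1 \<longleftrightarrow> cmod z = 1"
proof -
  have "cnj z * z = 1 \<longleftrightarrow> (cmod z)\<^sup>2 = 1" by (metis cnj_mult_self of_real_eq_1_iff)
  also have "\<dots> \<longleftrightarrow> cmod z = 1" by (smt (verit) norm_ge_zero power2_eq_1_iff)
  finally show ?thesis .
qed

lemma ph_eq: "complex_of_real (cmod z) * ph z = z"
  unfolding ph_def Complex.sgn_eq by auto
lemma ph_unit: "cnj (ph z) * ph z = 1"
  unfolding unit_cmod ph_def by (auto simp: norm_sgn)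

lemma unit_exp: assumes "cnj N * N = 1" shows "exp (\<i> * complex_of_real (Arg N)) = N"
proof -
  have n1: "cmod N = 1" using assms unit_cmod by blast
  then have "N \<noteq> 0" by auto
  then have "cis (Arg N) = sgn N" by (rule cis_Arg)
  then show ?thesis unfolding cis_conv_exp Complex.sgn_eq n1 by simp
qed


lemma sq_sum_real: "cnj A * A + cnj B * B = 1 \<Longrightarrow> (cmod A)\<^sup>2 + (cmod B)\<^sup>2 = 1"
proof -
  assume a: "cnj A * A + cnj B * B = 1"
  have "cnj A * A + cnj B * B = complex_of_real ((cmod A)\<^sup>2) + complex_of_real ((cmod B)\<^sup>2)"
    by (simp only: cnj_mult_self)
  also have "\<dots> = complex_of_real ((cmod A)\<^sup>2 + (cmod B)\<^sup>2)" by (simp only: of_real_add)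
  finally show ?thesis using a of_real_eq_1_iff by metis
qed



lemma cmod_sq: "cnj A * A + cnj B * B = 1 \<Longrightarrow> cmod B = sqrt (1 - (cmod A)\<^sup>2)"
proof -
  assume "cnj A * A + cnj B * B = 1"
  then have "(cmod A)\<^sup>2 + (cmod B)\<^sup>2 = 1" by (rule sq_sum_real)
  then have h: "(cmod B)\<^sup>2 = 1 - (cmod A)\<^sup>2" by linarith
  show ?thesis using real_sqrt_unique[OF h norm_ge_zero] by (rule sym)
qed

lemma cmod_le1: "cnj A * A + cnj B * B = 1 \<Longrightarrow> cmod A \<le> 1"
proof -
  assume "cnj A * A + cnj B * B = 1"
  then have "(cmod A)\<^sup>2 + (cmod B)\<^sup>2 = 1" by (rule sq_sum_real)
  moreover have "(cmod B)\<^sup>2 \<ge> 0" by simp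
  ultimately have "(cmod A)\<^sup>2 \<le> 1" by linarith
  then have "(cmod A)\<^sup>2 \<le> 1\<^sup>2" by simp
  then show ?thesis using power2_le_iff_abs_le[of 1 "cmod A"] by simp
qed


lemma M_struct:
  assumes "orthonormal_pair u v" "orthonormal_pair z w"
  defines "A \<equiv> cinner u z" and "B \<equiv> cinner v z" and "C \<equiv> cinner u w" and "D \<equiv> cinner v w"
  shows "cnj A * A + cnj B * B = 1" "C = - (A*D - B*C) * cnj B" "D = (A*D - B*C) * cnj A"
    "cnj (A*D - B*C) * (A*D - B*C) = 1"
proof -
  have h1: "cnj A * A + cnj B * B = 1"
    using completeness[OF assms(1), of z z] assms(2) by (simp add: A_def B_def orthonormal_pair_def)
  have h2: "cnj C * C + cnj D * D = 1"
    using completeness[OF assms(1), of w w] assms(2) by (simp add: C_def D_def orthonormal_pair_def)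
  have h3: "cnj A * C + cnj B * D = 0"
    using completeness[OF assms(1), of z w] assms(2) by (simp add: A_def B_def C_def D_def orthonormal_pair_def)
  show "cnj A * A + cnj B * B = 1" by (fact h1)
  show "C = - (A*D - B*C) * cnj B" "D = (A*D - B*C) * cnj A"
    "cnj (A*D - B*C) * (A*D - B*C) = 1" using onb_scalar[OF h1 h2 h3] by blast+
qed




lemma Pseq:
  fixes \<omega> \<beta> :: complex
  assumes w: "cnj \<omega> * \<omega> = 1" and b: "cnj \<beta> * \<beta> = 1"
  defines "P \<equiv> \<lambda>n::int. if 0 \<le> n then \<omega> powi n else \<beta> * \<omega> powi n"
  shows "cnj (P n) * P n = 1" "n \<noteq> 0 \<Longrightarrow> P n = \<omega> * P (n-1)" "P 0 = 1" "\<omega> * P (-1) = \<beta>"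
proof -
  have w1: "cmod \<omega> = 1" using w unit_cmod by blast
  have b1: "cmod \<beta> = 1" using b unit_cmod by blast
  have nz: "\<omega> \<noteq> 0" using w1 by auto
  have "cmod (P n) = 1" unfolding P_def using w1 b1 by (simp add: norm_power_int norm_mult)
  then show "cnj (P n) * P n = 1" using unit_cmod by blast
  have step: "\<omega> powi n = \<omega> * \<omega> powi (n-1)" for n
    using power_int_add_1'[of \<omega> "n-1"] nz by simp
  show "n \<noteq> 0 \<Longrightarrow> P n = \<omega> * P (n-1)"
    unfolding P_def using step[of n] by auto
  show "P 0 = 1" by (simp add: P_def)
  show "\<omega> * P (-1) = \<beta>" unfolding P_def using step[of 0] by simp
qed



lemma cscale_mult_nth: "(cscale c M *v v) $ i = c * (M *v v) $ i"
  by (simp add: cscale_def matrix_vector_mult_def sum_distrib_left mult.assoc)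

lemma cinner_self_norm: "cinner z z = complex_of_real ((norm z)\<^sup>2)"
proof -
  have "(norm z)\<^sup>2 = (cmod (z$1))\<^sup>2 + (cmod (z$2))\<^sup>2"
    by (simp add: norm_vec_def L2_set_def sum_2)
  then show ?thesis by (simp add: cinner_expand cnj_mult_self)
qed

lemma cnjs: "cnj (x * y) = cnj x * cnj y" "cnj (x + y) = cnj x + cnj y" "cnj (- x) = - cnj x"
  "cnj (x - y) = cnj x - cnj y"
  "cnj (complex_of_real t) = complex_of_real t" "cnj (cnj x) = x" "cnj 1 = 1" "cnj 0 = 0"
  by simp_all

lemma unit_mult: "cnj x * x = 1 \<Longrightarrow> cnj y * y = 1 \<Longrightarrow> cnj (x*y) * (x*y) = 1"
proof -
  assume "cnj x * x = 1" "cnj y * y = 1"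
  then show ?thesis by simp algebra
qed

lemma inv_unit: "cnj w * w = 1 \<Longrightarrow> w * p = b \<Longrightarrow> p = cnj w * b"
  by (metis mult.assoc mult_1_left)

lemma existence:
  assumes U: "qw_one_defect U" and Phi: "norm \<Phi> = 1"
  shows "\<exists>rpm r0 \<alpha> \<nu>1 \<nu>2 \<theta>. 0 \<le> rpm \<and> rpm \<le> 1 \<and> 0 \<le> r0 \<and> r0 \<le> 1 \<and>
              0 \<le> \<alpha> \<and> \<alpha> \<le> 1 \<and>
              unit_equiv U \<Phi> (U_std rpm r0 \<nu>1 \<nu>2) (Phi_at \<alpha> \<theta>)"
proof -
  from U obtain xi zeta \<xi>1 \<xi>2 \<zeta>1 \<zeta>2 where
    oxi': "\<forall>n. orthonormal_pair (xi n (n + 1)) (xi n (n - 1))" and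
    oze': "\<forall>n. orthonormal_pair (zeta (n - 1) n) (zeta (n + 1) n)" and
    K': "\<forall>a b. U a b = (if b = a + 1 \<or> b = a - 1 then ket_bra (xi a b) (zeta a b) else 0)" and
    hom': "\<forall>n. n \<noteq> 0 \<longrightarrow> xi n (n + 1) = \<xi>1 \<and> xi n (n - 1) = \<xi>2 \<and> zeta (n - 1) n = \<zeta>1 \<and> zeta (n + 1) n = \<zeta>2"
    unfolding qw_one_defect_def by blast
  have oxi: "\<And>n. orthonormal_pair (xi n (n + 1)) (xi n (n - 1))" using oxi' by blast
  have oze: "\<And>n. orthonormal_pair (zeta (n - 1) n) (zeta (n + 1) n)" using oze' by blast
  have K: "\<And>a b. U a b = (if b = a + 1 \<or> b = a - 1 then ket_bra (xi a b) (zeta a b) else 0)" using K' by blast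
  have hom: "\<And>n. n \<noteq> 0 \<Longrightarrow> xi n (n + 1) = \<xi>1 \<and> xi n (n - 1) = \<xi>2 \<and> zeta (n - 1) n = \<zeta>1 \<and> zeta (n + 1) n = \<zeta>2"
    using hom' by blast
  define Af where "Af = (\<lambda>n. cinner (xi n (n+1)) (zeta (n-1) n))"
  define Bf where "Bf = (\<lambda>n. cinner (xi n (n-1)) (zeta (n-1) n))"
  define Cf where "Cf = (\<lambda>n. cinner (xi n (n+1)) (zeta (n+1) n))"
  define Df where "Df = (\<lambda>n. cinner (xi n (n-1)) (zeta (n+1) n))"
  have Ms: "cnj (Af n) * Af n + cnj (Bf n) * Bf n = 1"
     "Cf n = - (Af n * Df n - Bf n * Cf n) * cnj (Bf n)"
     "Df n = (Af n * Df n - Bf n * Cf n) * cnj (Af n)"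
     "cnj (Af n * Df n - Bf n * Cf n) * (Af n * Df n - Bf n * Cf n) = 1" for n
    using M_struct[OF oxi[of n] oze[of n]] unfolding Af_def Bf_def Cf_def Df_def by blast+
  define A where "A = Af 1" define B where "B = Bf 1" define C where "C = Cf 1" define D where "D = Df 1"
  have bulk: "Af n = A" "Bf n = B" "Cf n = C" "Df n = D" if "n \<noteq> 0" for n
    using hom[OF that] hom[of 1] unfolding A_def B_def C_def Df_def D_def Af_def Bf_def Cf_def by auto
  define \<delta> where "\<delta> = A * D - B * C"
  define \<delta>0 where "\<delta>0 = Af 0 * Df 0 - Bf 0 * Cf 0"
  have sumA: "cnj A * A + cnj B * B = 1" and Ceq: "C = - \<delta> * cnj B" and Deq: "D = \<delta> * cnj A"
    and du: "cnj \<delta> * \<delta> = 1"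
    using Ms[of 1] unfolding A_def B_def C_def D_def \<delta>_def by blast+
  have sumA0: "cnj (Af 0) * Af 0 + cnj (Bf 0) * Bf 0 = 1" and C0eq: "Cf 0 = - \<delta>0 * cnj (Bf 0)"
    and D0eq: "Df 0 = \<delta>0 * cnj (Af 0)" and du0: "cnj \<delta>0 * \<delta>0 = 1"
    using Ms[of 0] unfolding \<delta>0_def by blast+
  define r where "r = cmod A" define s where "s = cmod B"
  define a where "a = ph A" define b where "b = ph B"
  define r0 where "r0 = cmod (Af 0)" define s0 where "s0 = cmod (Bf 0)"
  define a0 where "a0 = ph (Af 0)" define b0 where "b0 = ph (Bf 0)"
  have Aeq: "A = complex_of_real r * a" and Beq: "B = complex_of_real s * b"
    and A0eq: "Af 0 = complex_of_real r0 * a0" and B0eq: "Bf 0 = complex_of_real s0 * b0"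
    by (simp_all add: r_def s_def a_def b_def r0_def s0_def a0_def b0_def ph_eq)
  have au: "cnj a * a = 1" and bu: "cnj b * b = 1" and a0u: "cnj a0 * a0 = 1" and b0u: "cnj b0 * b0 = 1"
    by (simp_all add: a_def b_def a0_def b0_def ph_unit)
  have s_eq: "s = sqrt (1 - r\<^sup>2)" using cmod_sq[OF sumA] by (simp add: s_def r_def)
  have s0_eq: "s0 = sqrt (1 - r0\<^sup>2)" using cmod_sq[OF sumA0] by (simp add: s0_def r0_def)
  define \<gamma> where "\<gamma> = csqrt \<delta>"
  have g2: "\<gamma> * \<gamma> = \<delta>" unfolding \<gamma>_def by (metis power2_csqrt power2_eq_square)
  have gu: "cnj \<gamma> * \<gamma> = 1"
  proof -
    have "cmod \<delta> = 1" using du unit_cmod by blast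
    then have "cmod \<gamma> = 1" by (simp add: \<gamma>_def)
    then show ?thesis using unit_cmod by blast
  qed
  define \<omega> where "\<omega> = cnj a * \<gamma>"
  define \<kappa> where "\<kappa> = a * cnj b"
  define \<beta> where "\<beta> = cnj a * a0"
  have wu: "cnj \<omega> * \<omega> = 1" unfolding \<omega>_def using au gu by simp algebra
  have bbu: "cnj \<beta> * \<beta> = 1" unfolding \<beta>_def using au a0u by simp algebra
  have ku: "cnj \<kappa> * \<kappa> = 1" unfolding \<kappa>_def using au bu by simp algebra
  define P where "P = (\<lambda>n::int. if 0 \<le> n then \<omega> powi n else \<beta> * \<omega> powi n)"
  have Pu: "cnj (P n) * P n = 1" for n using Pseq(1)[OF wu bbu] unfolding P_def by blast
  have Pstep: "n \<noteq> 0 \<Longrightarrow> P n = \<omega> * P (n-1)" for n using Pseq(2)[OF wu bbu] unfolding P_def by blast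
  have P0: "P 0 = 1" using Pseq(3)[OF wu bbu] unfolding P_def by blast
  have Pm1: "\<omega> * P (-1) = \<beta>" using Pseq(4)[OF wu bbu] unfolding P_def by blast
  define Q where "Q = (\<lambda>n::int. if n = 0 then \<beta> * \<kappa> else \<kappa> * P n)"
  have Qb: "n \<noteq> 0 \<Longrightarrow> Q n = \<kappa> * P n" for n by (simp add: Q_def)
  have Q0: "Q 0 = \<beta> * \<kappa>" by (simp add: Q_def)
  have Q1: "Q (n+1) = \<kappa> * \<omega> * P n" for n
  proof (cases "n = -1")
    case True then show ?thesis using Pm1 by (simp add: Q_def)
  next
    case False then show ?thesis using Pstep[of "n+1"] by (simp add: Q_def)
  qed
  have Qu: "cnj (Q n) * Q n = 1" for n
  proof (cases "n = 0")
    case True then show ?thesis using unit_mult[OF bbu ku] by (simp add: Q_def)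
  next
    case False then show ?thesis using unit_mult[OF ku Pu[of n]] by (simp add: Q_def)
  qed
  define W where "W = (\<lambda>n. Wm (P n) (Q n) (xi n (n+1)) (xi n (n-1)))"
  have Wu: "unitary2 (W n)" for n unfolding W_def by (rule unitary_Wm[OF oxi Pu Qu])
  define N1 where "N1 = cnj b * b0"
  define N2 where "N2 = cnj \<delta> * \<delta>0 * b * cnj b0"
  have N1u: "cnj N1 * N1 = 1" unfolding N1_def using bu b0u by simp algebra
  have N2u: "cnj N2 * N2 = 1" unfolding N2_def using bu b0u du du0 by simp algebra
  define \<nu>1 where "\<nu>1 = Arg N1"
  define \<nu>2 where "\<nu>2 = Arg N2"
  have e1: "exp (\<i> * complex_of_real \<nu>1) = N1" unfolding \<nu>1_def by (rule unit_exp[OF N1u])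
  have e2: "exp (\<i> * complex_of_real \<nu>2) = N2" unfolding \<nu>2_def by (rule unit_exp[OF N2u])
  have e12: "exp (\<i> * complex_of_real (\<nu>1 + \<nu>2)) = N1 * N2"
    using e1 e2 by (simp add: distrib_left exp_add)
  have pm1: "P (-1) = cnj \<omega> * \<beta>" using inv_unit[OF wu Pm1] .
  have Q1': "Q 1 = \<kappa> * \<omega>" using Q1[of 0] P0 by simp
  have cg2: "cnj \<gamma> * cnj \<gamma> = cnj \<delta>" using arg_cong[OF g2, of cnj] by simp
  have minus: "cscale \<gamma> (W (k-1) ** U (k-1) k ** adj (W k)) = U_std r r0 \<nu>1 \<nu>2 (k-1) k" for k
  proof -
    have Uk: "U (k-1) k = ket_bra (xi (k-1) k) (zeta (k-1) k)" using K[of "k-1" k] by simp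
    have Wx: "W (k-1) *v xi (k-1) k = vector [P (k-1), 0]" using Wm_u[OF oxi[of "k-1"]] by (simp add: W_def)
    have Wz1: "(W k *v zeta (k-1) k)$1 = P k * Af k" by (simp add: W_def Af_def)
    have Wz2: "(W k *v zeta (k-1) k)$2 = Q k * Bf k" by (simp add: W_def Bf_def)
    show ?thesis
    proof (cases "k = 0")
      case True
      have t: "U_std r r0 \<nu>1 \<nu>2 (k-1) k = ket_bra e1 (vector [complex_of_real r0, N1 * complex_of_real s0])"
        using True by (simp add: U_std_def e1 s0_eq)
      have c1: "\<gamma> * P (k-1) * cnj (P k * Af k) = cnj (complex_of_real r0)"
        unfolding True apply (simp only: P0 pm1 A0eq \<omega>_def \<beta>_def cnjs diff_0 mult_1_left)
        using au gu a0u by algebra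
      have c2: "\<gamma> * P (k-1) * cnj (Q k * Bf k) = cnj (N1 * complex_of_real s0)"
        unfolding True apply (simp only: Q0 pm1 B0eq \<omega>_def \<beta>_def \<kappa>_def N1_def cnjs diff_0)
        using au gu a0u bu b0u by algebra
      show ?thesis unfolding Uk t by (rule ket1_eq[OF Wx]) (simp_all only: Wz1 Wz2 c1 c2)
    next
      case False
      have t: "U_std r r0 \<nu>1 \<nu>2 (k-1) k = ket_bra e1 (vector [complex_of_real r, complex_of_real s])"
        using False by (simp add: U_std_def s_eq)
      have c1: "\<gamma> * P (k-1) * cnj (P k * Af k) = cnj (complex_of_real r)"
        apply (simp only: Pstep[OF False] bulk[OF False] Aeq \<omega>_def cnjs)
        using au gu Pu[of "k-1"] by algebra
      have c2: "\<gamma> * P (k-1) * cnj (Q k * Bf k) = cnj (complex_of_real s)"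
        apply (simp only: Qb[OF False] Pstep[OF False] bulk[OF False] Beq \<omega>_def \<kappa>_def cnjs)
        using au gu bu Pu[of "k-1"] by algebra
      show ?thesis unfolding Uk t by (rule ket1_eq[OF Wx]) (simp_all only: Wz1 Wz2 c1 c2)
    qed
  qed
  have plus: "cscale \<gamma> (W (k+1) ** U (k+1) k ** adj (W k)) = U_std r r0 \<nu>1 \<nu>2 (k+1) k" for k
  proof -
    have Uk: "U (k+1) k = ket_bra (xi (k+1) k) (zeta (k+1) k)" using K[of "k+1" k] by simp
    have Wx: "W (k+1) *v xi (k+1) k = vector [0, Q (k+1)]" using Wm_v[OF oxi[of "k+1"]] by (simp add: W_def)
    have Wz1: "(W k *v zeta (k+1) k)$1 = P k * Cf k" by (simp add: W_def Cf_def)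
    have Wz2: "(W k *v zeta (k+1) k)$2 = Q k * Df k" by (simp add: W_def Df_def)
    show ?thesis
    proof (cases "k = 0")
      case True
      have t: "U_std r r0 \<nu>1 \<nu>2 (k+1) k = ket_bra e2 (vector [- (N2 * complex_of_real s0), N1 * N2 * complex_of_real r0])"
        using True e12[unfolded of_real_add] by (simp add: U_std_def e2 s0_eq)
      have c1: "\<gamma> * Q (k+1) * cnj (P k * Cf k) = cnj (- (N2 * complex_of_real s0))"
        unfolding True apply (simp only: Q1' P0 C0eq B0eq \<omega>_def \<kappa>_def N2_def cnjs add_0 mult_1_right mult_1_left)
        using au gu a0u bu b0u g2 cg2 by algebra
      have c2: "\<gamma> * Q (k+1) * cnj (Q k * Df k) = cnj (N1 * N2 * complex_of_real r0)"
        unfolding True apply (simp only: Q1' Q0 P0 D0eq A0eq \<omega>_def \<beta>_def \<kappa>_def N1_def N2_def cnjs add_0 mult_1_right mult_1_left)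
        using au gu a0u bu b0u g2 cg2 by algebra
      show ?thesis unfolding Uk t by (rule ket2_eq[OF Wx]) (simp_all only: Wz1 Wz2 c1 c2)
    next
      case False
      have t: "U_std r r0 \<nu>1 \<nu>2 (k+1) k = ket_bra e2 (vector [- complex_of_real s, complex_of_real r])"
        using False by (simp add: U_std_def s_eq)
      have c1: "\<gamma> * Q (k+1) * cnj (P k * Cf k) = cnj (- complex_of_real s)"
        apply (simp only: Q1 bulk[OF False] Ceq Beq \<omega>_def \<kappa>_def cnjs)
        using au gu bu Pu[of k] g2 cg2 by algebra
      have c2: "\<gamma> * Q (k+1) * cnj (Q k * Df k) = cnj (complex_of_real r)"
        apply (simp only: Q1 Qb[OF False] bulk[OF False] Deq Aeq \<omega>_def \<kappa>_def cnjs)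
        using au gu bu Pu[of k] g2 cg2 by algebra
      show ?thesis unfolding Uk t by (rule ket2_eq[OF Wx]) (simp_all only: Wz1 Wz2 c1 c2)
    qed
  qed
  have main: "cscale (exp (\<i> * complex_of_real (Arg \<gamma>))) (W n ** U n m ** adj (W m)) = U_std r r0 \<nu>1 \<nu>2 n m" for n m
  proof -
    have eg: "exp (\<i> * complex_of_real (Arg \<gamma>)) = \<gamma>" by (rule unit_exp[OF gu])
    show ?thesis
    proof (cases "m = n + 1")
      case True then show ?thesis using minus[of m] eg by simp
    next
      case F1: False
      show ?thesis
      proof (cases "m = n - 1")
        case True then show ?thesis using plus[of m] eg by simp
      next
        case False
        have "U n m = 0" using K[of n m] F1 False by simp
        moreover have "U_std r r0 \<nu>1 \<nu>2 n m = 0" using F1 False by (auto simp: U_std_def Let_def)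
        ultimately show ?thesis using zero_entry[of _ "W n" "W m"] by (simp only:)
      qed
    qed
  qed
  define x where "x = cinner (xi 0 1) \<Phi>"
  define y where "y = cinner (xi 0 (-1)) \<Phi>"
  have xy: "cnj x * x + cnj y * y = 1"
    using completeness[OF oxi[of 0], of \<Phi> \<Phi>] cinner_self_norm[of \<Phi>] Phi by (simp add: x_def y_def)
  have WPhi1: "(W 0 *v \<Phi>)$1 = x" using P0 by (simp add: W_def x_def)
  have WPhi2: "(W 0 *v \<Phi>)$2 = \<beta> * \<kappa> * y" using Q0 by (simp add: W_def y_def)
  define E2 where "E2 = cnj (ph x)"
  define \<theta> where "\<theta> = Arg (cnj (ph x) * \<beta> * \<kappa> * ph y)"
  have thu: "cnj (cnj (ph x) * \<beta> * \<kappa> * ph y) * (cnj (ph x) * \<beta> * \<kappa> * ph y) = 1"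
    by (intro unit_mult bbu ku ph_unit) (metis ph_unit complex_cnj_cnj mult.commute)
  have eth: "exp (\<i> * complex_of_real \<theta>) = cnj (ph x) * \<beta> * \<kappa> * ph y"
    unfolding \<theta>_def by (rule unit_exp[OF thu])
  have E2u: "cnj E2 * E2 = 1" unfolding E2_def by (metis ph_unit complex_cnj_cnj mult.commute)
  have eE2: "exp (\<i> * complex_of_real (Arg E2)) = E2" by (rule unit_exp[OF E2u])
  have yeq: "cmod y = sqrt (1 - (cmod x)\<^sup>2)" by (rule cmod_sq[OF xy])
  have phi: "cscale (exp (\<i> * complex_of_real (Arg E2))) (W 0) *v \<Phi> = Phi_at (cmod x) \<theta>"
  proof -
    have p1: "E2 * x = complex_of_real (cmod x)"
      unfolding E2_def using ph_eq[of x] ph_unit[of x] by (metis mult.assoc mult.commute mult_1_left)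
    have p2: "E2 * (\<beta> * \<kappa> * y) = exp (\<i> * complex_of_real \<theta>) * complex_of_real (sqrt (1 - (cmod x)\<^sup>2))"
      unfolding eth yeq[symmetric] E2_def using ph_eq[of y] by (simp add: ac_simps)
    show ?thesis unfolding vec_eq_iff forall_2 cscale_mult_nth eE2 WPhi1 WPhi2
      using p1 p2 by (simp add: Phi_at_def)
  qed
  show ?thesis
  proof (intro exI conjI)
    show "0 \<le> r" "r \<le> 1" "0 \<le> r0" "r0 \<le> 1" "0 \<le> cmod x" "cmod x \<le> 1"
      using cmod_le1[OF sumA] cmod_le1[OF sumA0] cmod_le1[OF xy] by (simp_all add: r_def r0_def)
    show "unit_equiv U \<Phi> (U_std r r0 \<nu>1 \<nu>2) (Phi_at (cmod x) \<theta>)"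
      unfolding unit_equiv_def using Wu main phi by blast
  qed
qed


definition ymin :: "real \<Rightarrow> real \<Rightarrow> real \<Rightarrow> int \<Rightarrow> complex^2" where
  "ymin r r0 \<nu>1 k = (if k = 0 then vector [complex_of_real r0, exp (\<i> * complex_of_real \<nu>1) * complex_of_real (sqrt (1 - r0\<^sup>2))]
     else vector [complex_of_real r, complex_of_real (sqrt (1 - r\<^sup>2))])"

definition yplus :: "real \<Rightarrow> real \<Rightarrow> real \<Rightarrow> real \<Rightarrow> int \<Rightarrow> complex^2" where
  "yplus r r0 \<nu>1 \<nu>2 k = (if k = 0 then vector [- exp (\<i> * complex_of_real \<nu>2) * complex_of_real (sqrt (1 - r0\<^sup>2)),
                                            exp (\<i> * complex_of_real (\<nu>1 + \<nu>2)) * complex_of_real r0]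
     else vector [- complex_of_real (sqrt (1 - r\<^sup>2)), complex_of_real r])"

lemma U_std_minus: "U_std r r0 \<nu>1 \<nu>2 (k-1) k = ket_bra e1 (ymin r r0 \<nu>1 k)"
  by (simp add: U_std_def ymin_def Let_def)

lemma U_std_plus: "U_std r r0 \<nu>1 \<nu>2 (k+1) k = ket_bra e2 (yplus r r0 \<nu>1 \<nu>2 k)"
  by (simp add: U_std_def yplus_def Let_def)

lemma entry_eq: "cscale E (W ** ket_bra x y ** adj V) = ket_bra x' y' \<Longrightarrow>
   E * (W *v x)$i * cnj ((V *v y)$j) = x'$i * cnj (y'$j)"
  by (metis conj_entry ket_bra_nth)

lemma mv_e1: "((W::blk) *v e1)$i = W$i$1" by (simp add: matrix_vector_mult_def sum_2 e1_def)
lemma mv_e2: "((W::blk) *v e2)$i = W$i$2" by (simp add: matrix_vector_mult_def sum_2 e2_def)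
lemma mv_nth: "((W::blk) *v y)$i = W$i$1 * y$1 + W$i$2 * y$2" by (simp add: matrix_vector_mult_def sum_2)

lemma exp_inj:
  assumes "x \<in> {0..<2*pi}" "y \<in> {0..<2*pi}" "exp (\<i> * complex_of_real x) = exp (\<i> * complex_of_real y)"
  shows "x = y"
proof -
  obtain n :: int where "\<i> * complex_of_real x = \<i> * complex_of_real y + (of_int (2 * n) * pi) * \<i>"
    using assms(3) exp_eq by blast
  then have "\<i> * complex_of_real x = \<i> * complex_of_real (y + 2 * pi * of_int n)"
    by (simp add: algebra_simps)
  then have "complex_of_real x = complex_of_real (y + 2 * pi * of_int n)"
    by (simp only: mult_cancel_left complex_i_not_zero simp_thms)
  then have "x = y + 2 * pi * of_int n" by (simp only: of_real_eq_iff)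
  then have e: "x - y = 2 * pi * of_int n" by simp
  have "x - y < 2 * pi" "- (2 * pi) < x - y" using assms(1,2) by auto
  then have a1: "2 * pi * of_int n < 2 * pi * 1" and a2: "2 * pi * (-1) < 2 * pi * of_int n"
    unfolding e by simp_all
  have pp: "0 < 2 * pi" by simp
  have "of_int n < (1::real)" using a1 mult_less_cancel_left_pos[OF pp] by blast
  moreover have "(-1::real) < of_int n" using a2 mult_less_cancel_left_pos[OF pp] by blast
  ultimately have "n = 0" by linarith
  then show ?thesis using e by simp
qed

lemma unit_E: "cnj (exp (\<i> * complex_of_real l)) * exp (\<i> * complex_of_real l) = 1"
  by (simp add: unit_cmod)



lemma unit_real_eq: "cnj X * X = 1 \<Longrightarrow> X * complex_of_real a = complex_of_real b \<Longrightarrow> 0 \<le> a \<Longrightarrow> 0 \<le> b \<Longrightarrow> a = b"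
proof -
  assume u: "cnj X * X = 1" and e: "X * complex_of_real a = complex_of_real b" and "0 \<le> a" "0 \<le> b"
  have "cmod X = 1" using u unit_cmod by blast
  then have "cmod (X * complex_of_real a) = a" using \<open>0 \<le> a\<close> by (simp add: norm_mult)
  then show ?thesis using e \<open>0 \<le> b\<close> by simp
qed

lemma cancel_c: "X * c = c \<Longrightarrow> c \<noteq> 0 \<Longrightarrow> X = (1::complex)"
  by simp

lemma cancel_c2: "X * c = Y * c \<Longrightarrow> c \<noteq> 0 \<Longrightarrow> X = (Y::complex)"
  by simp

lemma alg1:
  fixes E a b x y :: complex
  assumes h1: "E*a*cnj b*x = y" and h2: "E*b*cnj a = 1" and h3: "E*E = 1" and h4: "cnj a*a = 1" and h5: "cnj b * b = 1"
  shows "x = y"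
proof -
  have "x = x * (E*E) * (cnj a * a) * (cnj b * b)" using h3 h4 h5 by simp
  also have "\<dots> = (E*a*cnj b*x) * (E*b*cnj a)" by (simp add: mult_ac)
  also have "\<dots> = y" using h1 h2 by simp
  finally show ?thesis .
qed

lemma uniqueness:
  assumes rr: "0 < r" "r < 1" "0 < r0" "r0 < 1" "0 < \<alpha>" "\<alpha> < 1"
    "0 < r'" "r' < 1" "0 < r0'" "r0' < 1" "0 < \<alpha>'" "\<alpha>' < 1"
    and ang: "\<nu>1 \<in> {0..<2*pi}" "\<nu>2 \<in> {0..<2*pi}" "\<theta> \<in> {0..<2*pi}"
      "\<nu>1' \<in> {0..<2*pi}" "\<nu>2' \<in> {0..<2*pi}" "\<theta>' \<in> {0..<2*pi}"
    and UE: "unit_equiv (U_std r r0 \<nu>1 \<nu>2) (Phi_at \<alpha> \<theta>) (U_std r' r0' \<nu>1' \<nu>2') (Phi_at \<alpha>' \<theta>')"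
  shows "r = r' \<and> r0 = r0' \<and> \<nu>1 = \<nu>1' \<and> \<nu>2 = \<nu>2' \<and> \<alpha> = \<alpha>' \<and> \<theta> = \<theta>'"
proof -
  from UE obtain l1 l2 W where Wu: "\<forall>n. unitary2 (W n)"
    and eq: "\<forall>n m. cscale (exp (\<i> * complex_of_real l1)) (W n ** U_std r r0 \<nu>1 \<nu>2 n m ** adj (W m)) = U_std r' r0' \<nu>1' \<nu>2' n m"
    and phe: "cscale (exp (\<i> * complex_of_real l2)) (W 0) *v Phi_at \<alpha> \<theta> = Phi_at \<alpha>' \<theta>'"
    unfolding unit_equiv_def by blast
  define E where "E = exp (\<i> * complex_of_real l1)"
  define E2 where "E2 = exp (\<i> * complex_of_real l2)"
  have Eu: "cnj E * E = 1" unfolding E_def by (rule unit_E)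
  have E2u: "cnj E2 * E2 = 1" unfolding E2_def by (rule unit_E)
  have Enz: "E \<noteq> 0" using Eu by auto
  have meq: "E * (W (k-1))$i$1 * cnj ((W k *v ymin r r0 \<nu>1 k)$j) = e1$i * cnj (ymin r' r0' \<nu>1' k $j)" for k i j
    using entry_eq[OF eq[rule_format, of "k-1" k, unfolded U_std_minus E_def[symmetric]], unfolded mv_e1] .
  have peq: "E * (W (k+1))$i$2 * cnj ((W k *v yplus r r0 \<nu>1 \<nu>2 k)$j) = e2$i * cnj (yplus r' r0' \<nu>1' \<nu>2' k $j)" for k i j
    using entry_eq[OF eq[rule_format, of "k+1" k, unfolded U_std_plus E_def[symmetric]], unfolded mv_e2] .
  have ym: "ymin r' r0' \<nu>1' k $1 \<noteq> 0" for k using rr by (simp add: ymin_def)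
  have yp: "yplus r' r0' \<nu>1' \<nu>2' k $2 \<noteq> 0" for k using rr by (simp add: yplus_def)
  have d21: "W n $2$1 = 0" for n
  proof -
    have h1: "E * W n$1$1 * cnj ((W (n+1) *v ymin r r0 \<nu>1 (n+1))$1) = cnj (ymin r' r0' \<nu>1' (n+1) $1)"
      using meq[of "n+1" 1 1] by (simp add: e1_def)
    have h2: "E * W n$2$1 * cnj ((W (n+1) *v ymin r r0 \<nu>1 (n+1))$1) = 0"
      using meq[of "n+1" 2 1] by (simp add: e1_def)
    have "cnj ((W (n+1) *v ymin r r0 \<nu>1 (n+1))$1) \<noteq> 0" using h1 ym[of "n+1"] by auto
    then show ?thesis using h2 Enz by simp
  qed
  have d12: "W n $1$2 = 0" for n
  proof -
    have h1: "E * W n$2$2 * cnj ((W (n-1) *v yplus r r0 \<nu>1 \<nu>2 (n-1))$2) = cnj (yplus r' r0' \<nu>1' \<nu>2' (n-1) $2)"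
      using peq[of "n-1" 2 2] by (simp add: e2_def)
    have h2: "E * W n$1$2 * cnj ((W (n-1) *v yplus r r0 \<nu>1 \<nu>2 (n-1))$2) = 0"
      using peq[of "n-1" 1 2] by (simp add: e2_def)
    have "cnj ((W (n-1) *v yplus r r0 \<nu>1 \<nu>2 (n-1))$2) \<noteq> 0" using h1 yp[of "n-1"] by auto
    then show ?thesis using h2 Enz by simp
  qed
  define p where "p = (\<lambda>n. W n $1$1)"
  define q where "q = (\<lambda>n. W n $2$2)"
  have pu: "cnj (p n) * p n = 1" and qu: "cnj (q n) * q n = 1" for n
  proof -
    have "adj (W n) ** W n = mat 1" using Wu unitary2_def by blast
    then have a: "(adj (W n) ** W n)$1$1 = 1" "(adj (W n) ** W n)$2$2 = 1" by (simp_all add: mat_def)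
    show "cnj (p n) * p n = 1" using a(1) d21[of n] by (simp add: p_def adj_def matrix_matrix_mult_def sum_2)
    show "cnj (q n) * q n = 1" using a(2) d12[of n] by (simp add: q_def adj_def matrix_matrix_mult_def sum_2)
  qed
  have Wv1: "(W k *v y)$1 = p k * y$1" and Wv2: "(W k *v y)$2 = q k * y$2" for k y
    by (simp_all add: mv_nth p_def q_def d21 d12)
  have M1: "E * p (k-1) * cnj (p k * ymin r r0 \<nu>1 k $1) = cnj (ymin r' r0' \<nu>1' k $1)" for k
    using meq[of k 1 1] by (simp add: e1_def Wv1 p_def)
  have M2: "E * p (k-1) * cnj (q k * ymin r r0 \<nu>1 k $2) = cnj (ymin r' r0' \<nu>1' k $2)" for k
    using meq[of k 1 2] by (simp add: e1_def Wv2 p_def)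
  have P1: "E * q (k+1) * cnj (p k * yplus r r0 \<nu>1 \<nu>2 k $1) = cnj (yplus r' r0' \<nu>1' \<nu>2' k $1)" for k
    using peq[of k 2 1] by (simp add: e2_def Wv1 q_def)
  define pm1 where "pm1 = p (-1)"
  define p0 where "p0 = p 0" define p1 where "p1 = p 1"
  define q0 where "q0 = q 0" define q1 where "q1 = q 1" define q2 where "q2 = q 2"
  define e1 where "e1 = exp (\<i> * complex_of_real \<nu>1)" define e1' where "e1' = exp (\<i> * complex_of_real \<nu>1')"
  define e2 where "e2 = exp (\<i> * complex_of_real \<nu>2)" define e2' where "e2' = exp (\<i> * complex_of_real \<nu>2')"
  define et where "et = exp (\<i> * complex_of_real \<theta>)" define et' where "et' = exp (\<i> * complex_of_real \<theta>')"
  have upm1: "cnj pm1 * pm1 = 1" and up0: "cnj p0 * p0 = 1" and up1: "cnj p1 * p1 = 1"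
    and uq0: "cnj q0 * q0 = 1" and uq1: "cnj q1 * q1 = 1" and uq2: "cnj q2 * q2 = 1"
    by (simp_all add: pm1_def p0_def p1_def q0_def q1_def q2_def pu qu)
  have ucp1: "cnj (cnj p1) * cnj p1 = 1" and ucp0: "cnj (cnj p0) * cnj p0 = 1"
    using up1 up0 by (simp_all add: mult.commute)
  have f1: "E * p0 * cnj p1 * complex_of_real r = complex_of_real r'"
    using M1[of 1] by (simp add: ymin_def p0_def p1_def mult.assoc)
  have f2: "E * pm1 * cnj p0 * complex_of_real r0 = complex_of_real r0'"
    using M1[of 0] by (simp add: ymin_def p0_def pm1_def mult.assoc)
  have Phi1: "E2 * p0 * complex_of_real \<alpha> = complex_of_real \<alpha>'"
  proof -
    have "(cscale E2 (W 0) *v Phi_at \<alpha> \<theta>)$1 = Phi_at \<alpha>' \<theta>' $1" using phe E2_def by simp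
    then show ?thesis by (simp add: cscale_mult_nth Wv1 Phi_at_def p0_def mult.assoc)
  qed
  have Phi2: "E2 * q0 * et * complex_of_real (sqrt (1 - \<alpha>\<^sup>2)) = et' * complex_of_real (sqrt (1 - \<alpha>'\<^sup>2))"
  proof -
    have "(cscale E2 (W 0) *v Phi_at \<alpha> \<theta>)$2 = Phi_at \<alpha>' \<theta>' $2" using phe E2_def by simp
    then show ?thesis by (simp add: cscale_mult_nth Wv2 Phi_at_def q0_def et_def et'_def mult.assoc)
  qed
  have req: "r = r'"
    by (rule unit_real_eq[OF unit_mult[OF unit_mult[OF Eu up0] ucp1] f1]) (use rr in auto)
  have r0eq: "r0 = r0'"
    by (rule unit_real_eq[OF unit_mult[OF unit_mult[OF Eu upm1] ucp0] f2]) (use rr in auto)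
  have aeq: "\<alpha> = \<alpha>'"
    by (rule unit_real_eq[OF unit_mult[OF E2u up0] Phi1]) (use rr in auto)
  define s where "s = sqrt (1 - r\<^sup>2)"
  define s0 where "s0 = sqrt (1 - r0\<^sup>2)"
  define sa where "sa = sqrt (1 - \<alpha>\<^sup>2)"
  have spos: "complex_of_real s \<noteq> 0" "complex_of_real s0 \<noteq> 0" "complex_of_real sa \<noteq> 0"
    "complex_of_real r \<noteq> 0" "complex_of_real r0 \<noteq> 0" "complex_of_real \<alpha> \<noteq> 0"
    using rr by (simp_all add: s_def s0_def sa_def power2_eq_1_iff)
  have g1: "E * p1 * cnj q2 * complex_of_real s = complex_of_real s"
    using M2[of 2] req by (simp add: ymin_def p1_def q2_def s_def mult.assoc)
  have h1: "E * q2 * cnj p1 * complex_of_real s = complex_of_real s"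
    using P1[of 1] req by (simp add: yplus_def p1_def q2_def s_def mult.assoc)
  have g2: "E * p0 * cnj q1 * complex_of_real s = complex_of_real s"
    using M2[of 1] req by (simp add: ymin_def p0_def q1_def s_def mult.assoc)
  have h2: "E * q0 * cnj pm1 * complex_of_real s = complex_of_real s"
    using P1[of "-1"] req by (simp add: yplus_def pm1_def q0_def s_def mult.assoc)
  have g3: "E * pm1 * cnj q0 * cnj e1 * complex_of_real s0 = cnj e1' * complex_of_real s0"
    using M2[of 0] r0eq by (simp add: ymin_def pm1_def q0_def s0_def e1_def e1'_def mult.assoc)
  have h3: "E * q1 * cnj p0 * cnj e2 * complex_of_real s0 = cnj e2' * complex_of_real s0"
    using P1[of 0] r0eq by (simp add: yplus_def p0_def q1_def s0_def e2_def e2'_def mult.assoc)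
  have f2': "E * pm1 * cnj p0 * complex_of_real r0 = complex_of_real r0" using f2 r0eq by simp
  have Phi1': "E2 * p0 * complex_of_real \<alpha> = complex_of_real \<alpha>" using Phi1 aeq by simp
  have Phi2': "E2 * q0 * et * complex_of_real sa = et' * complex_of_real sa" using Phi2 aeq by (simp add: sa_def)
  have cg1: "E * p1 * cnj q2 = 1" by (rule cancel_c[OF g1 spos(1)])
  have ch1: "E * q2 * cnj p1 = 1" by (rule cancel_c[OF h1 spos(1)])
  have cg2: "E * p0 * cnj q1 = 1" by (rule cancel_c[OF g2 spos(1)])
  have ch2: "E * q0 * cnj pm1 = 1" by (rule cancel_c[OF h2 spos(1)])
  have cf2: "E * pm1 * cnj p0 = 1" by (rule cancel_c[OF f2' spos(5)])
  have cP1: "E2 * p0 = 1" by (rule cancel_c[OF Phi1' spos(6)])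
  have cg3: "E * pm1 * cnj q0 * cnj e1 = cnj e1'" by (rule cancel_c2[OF g3 spos(2)])
  have ch3: "E * q1 * cnj p0 * cnj e2 = cnj e2'" by (rule cancel_c2[OF h3 spos(2)])
  have cP2: "E2 * q0 * et = et'" by (rule cancel_c2[OF Phi2' spos(3)])
  have EE: "E * E = 1" using cg1 ch1 up1 uq2 by algebra
  have ce1: "cnj e1 = cnj e1'" by (rule alg1[OF cg3 ch2 EE upm1 uq0])
  have ce2: "cnj e2 = cnj e2'" by (rule alg1[OF ch3 cg2 EE uq1 up0])
  have qp: "q0 = p0" using cf2 ch2 EE upm1 up0 uq0 by algebra
  have ett: "et = et'" using cP1 cP2 qp by algebra
  have n1: "\<nu>1 = \<nu>1'" using exp_inj[OF ang(1) ang(4)] ce1 by (simp add: e1_def e1'_def)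
  have n2: "\<nu>2 = \<nu>2'" using exp_inj[OF ang(2) ang(5)] ce2 by (simp add: e2_def e2'_def)
  have th: "\<theta> = \<theta>'" using exp_inj[OF ang(3) ang(6)] ett by (simp add: et_def et'_def)
  show ?thesis using req r0eq aeq n1 n2 th by blast
qed



lemma adj_mat1: "adj (mat 1 :: blk) = mat 1"
  by (simp add: adj_def mat_def vec_eq_iff)

lemma cscale1: "cscale 1 M = M" by (simp add: cscale_def vec_eq_iff)

lemma ue_refl: "unit_equiv K \<Phi> K \<Phi>"
proof -
  have u: "unitary2 (mat 1 :: blk)" by (simp add: unitary2_def adj_mat1)
  show ?thesis unfolding unit_equiv_def
    apply (rule exI[of _ 0], rule exI[of _ 0], rule exI[of _ "\<lambda>n. mat 1"])
    using u by (simp add: adj_mat1 cscale1)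
qed

theorem corollary3p4:
  shows "(\<forall>(U::kernel) (\<Phi>::complex^2). qw_one_defect U \<and> norm \<Phi> = 1 \<longrightarrow>
           (\<exists>rpm r0 \<alpha> \<nu>1 \<nu>2 \<theta>. 0 \<le> rpm \<and> rpm \<le> 1 \<and> 0 \<le> r0 \<and> r0 \<le> 1 \<and>
              0 \<le> \<alpha> \<and> \<alpha> \<le> 1 \<and>
              unit_equiv U \<Phi> (U_std rpm r0 \<nu>1 \<nu>2) (Phi_at \<alpha> \<theta>))) \<and>
         (\<forall>rpm r0 \<nu>1 \<nu>2 \<alpha> \<theta> rpm' r0' \<nu>1' \<nu>2' \<alpha>' \<theta>'.
            0 < rpm \<and> rpm < 1 \<and> 0 < r0 \<and> r0 < 1 \<and> 0 < \<alpha> \<and> \<alpha> < 1 \<and>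
            0 < rpm' \<and> rpm' < 1 \<and> 0 < r0' \<and> r0' < 1 \<and> 0 < \<alpha>' \<and> \<alpha>' < 1 \<and>
            \<nu>1 \<in> {0..<2*pi} \<and> \<nu>2 \<in> {0..<2*pi} \<and> \<theta> \<in> {0..<2*pi} \<and>
            \<nu>1' \<in> {0..<2*pi} \<and> \<nu>2' \<in> {0..<2*pi} \<and> \<theta>' \<in> {0..<2*pi} \<longrightarrow>
            (unit_equiv (U_std rpm r0 \<nu>1 \<nu>2) (Phi_at \<alpha> \<theta>)
                        (U_std rpm' r0' \<nu>1' \<nu>2') (Phi_at \<alpha>' \<theta>')
             \<longleftrightarrow> rpm = rpm' \<and> r0 = r0' \<and> \<nu>1 = \<nu>1' \<and> \<nu>2 = \<nu>2' \<and> \<alpha> = \<alpha>' \<and> \<theta> = \<theta>'))"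
proof (intro conjI allI impI)
  fix U :: kernel and \<Phi> :: "complex^2"
  assume "qw_one_defect U \<and> norm \<Phi> = 1"
  then show "\<exists>rpm r0 \<alpha> \<nu>1 \<nu>2 \<theta>. 0 \<le> rpm \<and> rpm \<le> 1 \<and> 0 \<le> r0 \<and> r0 \<le> 1 \<and>
              0 \<le> \<alpha> \<and> \<alpha> \<le> 1 \<and> unit_equiv U \<Phi> (U_std rpm r0 \<nu>1 \<nu>2) (Phi_at \<alpha> \<theta>)"
    using existence by blast
next
  fix rpm r0 \<nu>1 \<nu>2 \<alpha> \<theta> rpm' r0' \<nu>1' \<nu>2' \<alpha>' \<theta>'  :: real
  assume h: "0 < rpm \<and> rpm < 1 \<and> 0 < r0 \<and> r0 < 1 \<and> 0 < \<alpha> \<and> \<alpha> < 1 \<and>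
            0 < rpm' \<and> rpm' < 1 \<and> 0 < r0' \<and> r0' < 1 \<and> 0 < \<alpha>' \<and> \<alpha>' < 1 \<and>
            \<nu>1 \<in> {0..<2*pi} \<and> \<nu>2 \<in> {0..<2*pi} \<and> \<theta> \<in> {0..<2*pi} \<and>
            \<nu>1' \<in> {0..<2*pi} \<and> \<nu>2' \<in> {0..<2*pi} \<and> \<theta>' \<in> {0..<2*pi}"
  show "unit_equiv (U_std rpm r0 \<nu>1 \<nu>2) (Phi_at \<alpha> \<theta>)
                        (U_std rpm' r0' \<nu>1' \<nu>2') (Phi_at \<alpha>' \<theta>')
             \<longleftrightarrow> rpm = rpm' \<and> r0 = r0' \<and> \<nu>1 = \<nu>1' \<and> \<nu>2 = \<nu>2' \<and> \<alpha> = \<alpha>' \<and> \<theta> = \<theta>'"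
  proof
    assume "unit_equiv (U_std rpm r0 \<nu>1 \<nu>2) (Phi_at \<alpha> \<theta>) (U_std rpm' r0' \<nu>1' \<nu>2') (Phi_at \<alpha>' \<theta>')"
    then show "rpm = rpm' \<and> r0 = r0' \<and> \<nu>1 = \<nu>1' \<and> \<nu>2 = \<nu>2' \<and> \<alpha> = \<alpha>' \<and> \<theta> = \<theta>'"
      using h uniqueness[of rpm r0 \<alpha> rpm' r0' \<alpha>' \<nu>1 \<nu>2 \<theta> \<nu>1' \<nu>2' \<theta>'] by blast
  next
    assume "rpm = rpm' \<and> r0 = r0' \<and> \<nu>1 = \<nu>1' \<and> \<nu>2 = \<nu>2' \<and> \<alpha> = \<alpha>' \<and> \<theta> = \<theta>'"
    then show "unit_equiv (U_std rpm r0 \<nu>1 \<nu>2) (Phi_at \<alpha> \<theta>) (U_std rpm' r0' \<nu>1' \<nu>2') (Phi_at \<alpha>' \<theta>')"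
      using ue_refl by metis
  qed
qed


end
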